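(* Let $R>0$ and let $A\subset\mathbb{R}^d$ be an $R$-supported body. Then $A$ is an $R$-body if and only if $$A=A_R\cap\Big(\bigcap_{a\in\partial A}C^a_{\mathcal{N}_R(A,a)}\Big).$$
   Context: A body is a nonempty closed subset of $\mathbb{R}^d$; $S^{d-1}$ is the unit sphere; $B(x)=\{y:|y-x|<R\}$; $A_R=\{x:\operatorname{dist}(x,A)<R\}$. A body $A$ is an $R$-body if every $y\notin A$ lies in some open ball of radius $R$ disjoint from $A$ (so $\mathbb{R}^d$ is an $R$-body). For $a\in\partial A$, $\mathcal{N}_R(A,a)=\{v\in S^{d-1}: A\cap B(a+Rv)=\emptyset\}$; $A$ is $R$-supported if $\mathcal{N}_R(A,a)\ne\emptyset$ for all $a\in\partial A$. For nonempty closed $\mathcal K\subset S^{d-1}$ and $x\in\mathbb{R}^d$, $C^x_{\mathcal K}=\bigcap_{v\in\mathcal K}(\mathbb{R}^d\setminus B(x+Rv))$. An intersection over an empty index set is $\mathbb{R}^d$. *)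

theory Defs
  imports "HOL-Analysis.Analysis"
begin

definition body :: "'a::euclidean_space set \<Rightarrow> bool" where
  "body A \<longleftrightarrow> A \<noteq> {} \<and> closed A"

definition unit_sphere :: "'a::euclidean_space set" where
  "unit_sphere = {v. norm v = 1}"

definition parallel_nbhd :: "real \<Rightarrow> 'a::euclidean_space set \<Rightarrow> 'a set" where
  "parallel_nbhd R A = {x. infdist x A < R}"

definition R_body :: "real \<Rightarrow> 'a::euclidean_space set \<Rightarrow> bool" where
  "R_body R A \<longleftrightarrow> body A \<and> (\<forall>y. y \<notin> A \<longrightarrow> (\<exists>c. y \<in> ball c R \<and> ball c R \<inter> A = {}))"

definition normal_cone_R :: "real \<Rightarrow> 'a::euclidean_space set \<Rightarrow> 'a \<Rightarrow> 'a set" where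
  "normal_cone_R R A a = {v \<in> unit_sphere. A \<inter> ball (a + R *\<^sub>R v) R = {}}"

definition R_supported :: "real \<Rightarrow> 'a::euclidean_space set \<Rightarrow> bool" where
  "R_supported R A \<longleftrightarrow> body A \<and> (\<forall>a \<in> frontier A. normal_cone_R R A a \<noteq> {})"

text \<open>C^x_K = intersection over v in K of complements of B(x + R v); equals UNIV if K is empty.\<close>
definition C_set :: "real \<Rightarrow> 'a::euclidean_space set \<Rightarrow> 'a \<Rightarrow> 'a set" where
  "C_set R K x = (\<Inter>v \<in> K. - ball (x + R *\<^sub>R v) R)"

end

theory Submission
  imports Defs
begin

theorem mainTheorem13:
  fixes A :: "'a::euclidean_space set" and R :: real
  assumes "R > 0" and "R_supported R A"
  shows "R_body R A \<longleftrightarrow>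
    A = parallel_nbhd R A \<inter> (\<Inter>a \<in> frontier A. C_set R (normal_cone_R R A a) a)"
proof
  have bA: "A \<noteq> {}" "closed A" using assms(2) by (auto simp: R_supported_def body_def)
  assume rb: "R_body R A"
  show "A = parallel_nbhd R A \<inter> (\<Inter>a \<in> frontier A. C_set R (normal_cone_R R A a) a)"
  proof
    show "A \<subseteq> parallel_nbhd R A \<inter> (\<Inter>a \<in> frontier A. C_set R (normal_cone_R R A a) a)"
      using assms(1) by (auto simp: parallel_nbhd_def C_set_def normal_cone_R_def)
  next
    show "parallel_nbhd R A \<inter> (\<Inter>a \<in> frontier A. C_set R (normal_cone_R R A a) a) \<subseteq> A"
    proof
      fix y assume yin: "y \<in> parallel_nbhd R A \<inter> (\<Inter>a \<in> frontier A. C_set R (normal_cone_R R A a) a)"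
      show "y \<in> A"
      proof (rule ccontr)
        assume "y \<notin> A"
        then obtain c where c: "y \<in> ball c R" "ball c R \<inter> A = {}"
          using rb by (auto simp: R_body_def)
        have dy: "infdist y A < R" using yin by (auto simp: parallel_nbhd_def)
        have dc: "R \<le> infdist c A"
        proof -
          obtain x where "x \<in> A" "infdist c A = dist c x"
            using infdist_attains_inf[OF bA(2) bA(1)] by blast
          then show ?thesis using c(2) by (auto simp: not_less[symmetric])
        qed
        define f where "f = (\<lambda>t::real. infdist (c + t *\<^sub>R (y - c)) A)"
        have "continuous_on {0..1} f" unfolding f_def by (intro continuous_intros)
        moreover have "f 1 \<le> R" "R \<le> f 0" using dy dc by (auto simp: f_def)
        ultimately obtain t where t: "0 \<le> t" "t \<le> 1" "f t = R"
          using IVT2'[of f 1 R 0] by auto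
        define z where "z = c + t *\<^sub>R (y - c)"
        have fz: "infdist z A = R" using t(3) by (simp add: f_def z_def)
        have "dist y z = (1 - t) * norm (y - c)"
        proof -
          have "y - z = (1 - t) *\<^sub>R (y - c)" by (simp add: z_def algebra_simps)
          then show ?thesis using t by (simp add: dist_norm)
        qed
        also have "\<dots> \<le> norm (y - c)" using t by (simp add: mult_left_le_one_le)
        also have "\<dots> < R" using c(1) by (simp add: dist_norm norm_minus_commute)
        finally have yz: "y \<in> ball z R" by (simp add: dist_commute)
        obtain a where a: "a \<in> A" "infdist z A = dist z a"
          using infdist_attains_inf[OF bA(2) bA(1)] by blast
        have disj: "A \<inter> ball z R = {}"
          using fz infdist_le[of _ A z] by (auto simp: not_less[symmetric]) 
        have "a \<in> cball z R" using a fz by simp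
        hence "a \<in> closure (ball z R)" using assms(1) by simp
        moreover have "closure (ball z R) \<subseteq> closure (- A)"
          using disj by (intro closure_mono) auto
        ultimately have "a \<in> frontier A"
          using a(1) closure_subset by (auto simp: frontier_closures)
        define v where "v = (1/R) *\<^sub>R (z - a)"
        have av: "a + R *\<^sub>R v = z" using assms(1) by (simp add: v_def)
        have "norm v = 1" using assms(1) a fz by (simp add: v_def dist_norm)
        hence "v \<in> normal_cone_R R A a" using disj av
          by (simp add: normal_cone_R_def unit_sphere_def)
        hence "y \<notin> C_set R (normal_cone_R R A a) a"
          using yz av by (auto simp: C_set_def)
        then show False using yin \<open>a \<in> frontier A\<close> by blast
      qed
    qed
  qed
next
  have bA: "body A" using assms(2) by (auto simp: R_supported_def)
  assume eq: "A = parallel_nbhd R A \<inter> (\<Inter>a \<in> frontier A. C_set R (normal_cone_R R A a) a)"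
  show "R_body R A" unfolding R_body_def
  proof (intro conjI allI impI bA)
    fix y assume "y \<notin> A"
    then have "y \<notin> parallel_nbhd R A \<or> (\<exists>a \<in> frontier A. y \<notin> C_set R (normal_cone_R R A a) a)"
      using eq by blast
    then show "\<exists>c. y \<in> ball c R \<and> ball c R \<inter> A = {}"
    proof
      assume "y \<notin> parallel_nbhd R A"
      then have "R \<le> infdist y A" by (simp add: parallel_nbhd_def)
      then have "ball y R \<inter> A = {}"
        using infdist_le[of _ A y] by (fastforce simp: not_less[symmetric])
      then show ?thesis using assms(1) by (intro exI[of _ y]) auto
    next
      assume "\<exists>a \<in> frontier A. y \<notin> C_set R (normal_cone_R R A a) a"
      then obtain a v where "v \<in> normal_cone_R R A a" "y \<in> ball (a + R *\<^sub>R v) R"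
        by (auto simp: C_set_def)
      then show ?thesis by (intro exI[of _ "a + R *\<^sub>R v"]) (auto simp: normal_cone_R_def)
    qed
  qed
qed

end
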